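(* In the setting described in the context, for every ordered subset $J$ of $\{1,\ldots,|L|\}$ with $1\leqslant |J|\leqslant n-1$, the line $\ell_J$ and the point $p_J$ are well-defined (that is, the intersections defining them are a line, respectively a point). Distinct ordered subsets $J$ give distinct lines $\ell_J$ and distinct points $p_J$. Furthermore, the line $\ell_J$ intersects $\pi_{|J|+1}$ in the point $p_J$.
   Context: Let ${\mathbb K}$ be a field, $n\geqslant 2$, and consider the projective space $\mathrm{PG}_n({\mathbb K})$. For two non-intersecting subspaces $x,y$, $x\oplus y$ denotes the subspace they span. Fix points $x_0,x_1,\ldots,x_n$ of $\mathrm{PG}_n({\mathbb K})$ in general position and put $\Sigma_i=x_0\oplus x_1\oplus\cdots\oplus x_i$ and $\pi_i=x_1\oplus\cdots\oplus x_i$ for $i=1,\ldots,n$. For $i=3,\ldots,n$ let $y_i$ be a point on the line $x_{i-1}\oplus x_i$ different from $x_{i-1}$ and $x_i$. Let $L$ be a finite set of lines of the plane $\Sigma_2$ which meet the line $\pi_2$ in pairwise distinct points, all different from $x_2$. Label the lines of $L$ as $\ell_{\{1\}},\ldots,\ell_{\{|L|\}}$ and put $p_{\{i\}}=\ell_{\{i\}}\cap\pi_2$. An ordered subset $J$ of $\{1,\ldots,|L|\}$ is a finite sequence of distinct elements of $\{1,\ldots,|L|\}$; if $|J|\geqslant 2$ write $J=(\ldots,b,a)$ where $a$ is the last and $b$ the second-to-last element, and let $J\setminus\{a\}$, $J\setminus\{b\}$ be the ordered subsets obtained by deleting $a$, respectively $b$ (keeping the order). For $2\leqslant |J|\leqslant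 n-1$ define recursively $$\ell_J=(x_{|J|+1}\oplus \ell_{J\setminus\{a\}})\cap(y_{|J|+1}\oplus \ell_{J\setminus\{b\}}),\qquad p_J=(x_{|J|+1}\oplus p_{J\setminus\{a\}})\cap(y_{|J|+1}\oplus p_{J\setminus\{b\}}).$$ *)

theory Defs
  imports Complex_Main "HOL-Library.Function_Algebras"
begin

text \<open>Vectors of the underlying vector space K^(n+1) are modelled as functions
  nat => 'k supported on {0..n}. Projective subspaces of PG_n(K) are modelled as
  linear subspaces of this space; projective dimension = linear dimension - 1.\<close>

definition fscale :: "'k::field \<Rightarrow> (nat \<Rightarrow> 'k) \<Rightarrow> (nat \<Rightarrow> 'k)" where
  "fscale c v = (\<lambda>i. c * v i)"

lemma vector_space_fscale: "vector_space (fscale :: 'k::field \<Rightarrow> _)"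
  by (unfold_locales; simp add: fscale_def fun_eq_iff algebra_simps)

definition ambient :: "nat \<Rightarrow> (nat \<Rightarrow> 'k::field) set" where
  "ambient n = {v. \<forall>i>n. v i = 0}"

abbreviation vspan :: "(nat \<Rightarrow> 'k::field) set \<Rightarrow> (nat \<Rightarrow> 'k) set" where
  "vspan \<equiv> module.span fscale"

abbreviation vdim :: "(nat \<Rightarrow> 'k::field) set \<Rightarrow> nat" where
  "vdim \<equiv> vector_space.dim fscale"

definition psub :: "nat \<Rightarrow> nat \<Rightarrow> (nat \<Rightarrow> 'k::field) set \<Rightarrow> bool" where
  "psub n d S \<longleftrightarrow> module.subspace fscale S \<and> S \<subseteq> ambient n \<and> vdim S = d"

abbreviation ppoint :: "nat \<Rightarrow> (nat \<Rightarrow> 'k::field) set \<Rightarrow> bool" where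
  "ppoint n S \<equiv> psub n 1 S"

abbreviation pline :: "nat \<Rightarrow> (nat \<Rightarrow> 'k::field) set \<Rightarrow> bool" where
  "pline n S \<equiv> psub n 2 S"

definition join :: "(nat \<Rightarrow> 'k::field) set \<Rightarrow> (nat \<Rightarrow> 'k) set \<Rightarrow> (nat \<Rightarrow> 'k) set"
  (infixl "\<oplus>\<^sub>P" 65) where
  "A \<oplus>\<^sub>P B = vspan (A \<union> B)"

definition general_position :: "nat \<Rightarrow> (nat \<Rightarrow> (nat \<Rightarrow> 'k::field) set) \<Rightarrow> bool" where
  "general_position n x \<longleftrightarrow> (\<forall>i\<le>n. ppoint n (x i)) \<and>
     (\<forall>I \<subseteq> {0..n}. vdim (vspan (\<Union>i\<in>I. x i)) = card I)"

definition Sigma_sp :: "(nat \<Rightarrow> (nat \<Rightarrow> 'k::field) set) \<Rightarrow> nat \<Rightarrow> (nat \<Rightarrow> 'k) set" where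
  "Sigma_sp x i = vspan (\<Union>j\<in>{0..i}. x j)"

definition pi_sp :: "(nat \<Rightarrow> (nat \<Rightarrow> 'k::field) set) \<Rightarrow> nat \<Rightarrow> (nat \<Rightarrow> 'k) set" where
  "pi_sp x i = vspan (\<Union>j\<in>{1..i}. x j)"

text \<open>For J = (..., b, a):
  J minus a = butlast J; J minus b = butlast (butlast J) @ [last J].\<close>
function rec_sp :: "(nat \<Rightarrow> (nat \<Rightarrow> 'k::field) set) \<Rightarrow> (nat \<Rightarrow> (nat \<Rightarrow> 'k) set)
    \<Rightarrow> (nat \<Rightarrow> (nat \<Rightarrow> 'k) set) \<Rightarrow> nat list \<Rightarrow> (nat \<Rightarrow> 'k) set" where
  "rec_sp x y base J =
    (if length J \<le> 1 then base (hd J)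
     else (x (length J + 1) \<oplus>\<^sub>P rec_sp x y base (butlast J)) \<inter>
          (y (length J + 1) \<oplus>\<^sub>P rec_sp x y base (butlast (butlast J) @ [last J])))"
  by pat_completeness auto
termination
  by (relation "measure (\<lambda>(x, y, base, J). length J)") auto

declare rec_sp.simps[simp del]

definition ellJ where "ellJ x y l J = rec_sp x y l J"
definition pJ where "pJ x y l J = rec_sp x y (\<lambda>i. l i \<inter> pi_sp x 2) J"

definition ordered_subset :: "nat \<Rightarrow> nat list \<Rightarrow> bool" where
  "ordered_subset m J \<longleftrightarrow> distinct J \<and> set J \<subseteq> {1..m}"

end

theory Submission
  imports Defs
begin


interpretation V: vector_space "fscale :: 'a::field \<Rightarrow> (nat \<Rightarrow> 'a) \<Rightarrow> (nat \<Rightarrow> 'a)"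
  by (rule vector_space_fscale)

definition FD :: "(nat \<Rightarrow> 'a::field) set \<Rightarrow> bool" where
  "FD S \<longleftrightarrow> (\<exists>W. finite W \<and> S \<subseteq> V.span W)"

lemma FD_basis:
  fixes T :: "(nat \<Rightarrow> 'a::field) set"
  assumes "FD T"
  obtains B where "B \<subseteq> T" "V.independent B" "T \<subseteq> V.span B" "card B = V.dim T" "finite B"
proof -
  obtain W where W: "finite W" "T \<subseteq> V.span W" using assms FD_def by blast
  obtain B where B: "B \<subseteq> T" "V.independent B" "T \<subseteq> V.span B" "card B = V.dim T"
    using V.basis_exists by blast
  have "B \<subseteq> V.span W" using B W by blast
  then have "finite B" using V.independent_span_bound[OF W(1) B(2)] by blast
  then show ?thesis using B that by blast
qed

lemma FD_subset: "S \<subseteq> T \<Longrightarrow> FD T \<Longrightarrow> FD S"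
  unfolding FD_def by blast

lemma FD_span: "FD (T::(nat \<Rightarrow> 'a::field) set) \<Longrightarrow> FD (V.span T)"
  unfolding FD_def by (metis V.span_minimal V.subspace_span)

lemma FD_Un: "FD (A::(nat \<Rightarrow> 'a::field) set) \<Longrightarrow> FD B \<Longrightarrow> FD (A \<union> B)"
  unfolding FD_def
proof (elim exE conjE)
  fix W1 W2 assume "finite W1" "A \<subseteq> V.span W1" "finite W2" "B \<subseteq> V.span W2"
  then show "\<exists>W. finite W \<and> A \<union> B \<subseteq> V.span W"
  proof (intro exI[of _ "W1 \<union> W2"] conjI)
    have "V.span W1 \<subseteq> V.span (W1 \<union> W2)" "V.span W2 \<subseteq> V.span (W1 \<union> W2)" by (simp_all add: V.span_mono)
    then show "A \<union> B \<subseteq> V.span (W1 \<union> W2)" using \<open>A \<subseteq> V.span W1\<close> \<open>B \<subseteq> V.span W2\<close> by blast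
  qed (use \<open>finite W1\<close> \<open>finite W2\<close> in simp)
qed

lemma FD_join: "FD (A::(nat \<Rightarrow> 'a::field) set) \<Longrightarrow> FD B \<Longrightarrow> FD (A \<oplus>\<^sub>P B)"
  unfolding join_def by (intro FD_span FD_Un)

lemma FD_dim_pos: "V.dim (S::(nat \<Rightarrow> 'a::field) set) \<noteq> 0 \<Longrightarrow> FD S"
proof -
  assume d: "V.dim S \<noteq> 0"
  obtain B where B: "B \<subseteq> S" "V.independent B" "S \<subseteq> V.span B" "card B = V.dim S"
    using V.basis_exists by blast
  then have "finite B" using d card.infinite by fastforce
  then show ?thesis using B FD_def by blast
qed

lemma dim_mono':
  fixes S T :: "(nat \<Rightarrow> 'a::field) set"
  assumes "S \<subseteq> V.span T" "FD T" shows "V.dim S \<le> V.dim T"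
proof -
  obtain B where B: "B \<subseteq> T" "V.independent B" "T \<subseteq> V.span B" "card B = V.dim T" "finite B"
    using FD_basis[OF assms(2)] by blast
  have "V.span T \<subseteq> V.span B" using B(3) by (metis V.span_minimal V.subspace_span)
  then show ?thesis using V.dim_le_card[of S B] assms B by auto
qed

lemma dim_mono: "S \<subseteq> T \<Longrightarrow> FD (T::(nat \<Rightarrow> 'a::field) set) \<Longrightarrow> V.dim S \<le> V.dim T"
  by (metis dim_mono' V.span_superset subset_trans)

lemma indep_le:
  fixes B T :: "(nat \<Rightarrow> 'a::field) set"
  assumes "V.independent B" "B \<subseteq> T" "FD T" shows "finite B \<and> card B \<le> V.dim T"
proof -
  obtain B' where B': "B' \<subseteq> T" "V.independent B'" "T \<subseteq> V.span B'" "card B' = V.dim T" "finite B'"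
    using FD_basis[OF assms(3)] by blast
  show ?thesis using V.independent_span_bound[OF B'(5) assms(1)] assms B' by auto
qed

lemma eq_dim:
  fixes S T :: "(nat \<Rightarrow> 'a::field) set"
  assumes "S \<subseteq> T" "V.subspace S" "FD T" "V.dim T \<le> V.dim S" shows "S = T"
proof (rule ccontr)
  assume "S \<noteq> T"
  then obtain t where t: "t \<in> T" "t \<notin> S" using assms(1) by blast
  have "FD S" using FD_subset assms by blast
  obtain B where B: "B \<subseteq> S" "V.independent B" "S \<subseteq> V.span B" "card B = V.dim S" "finite B"
    using FD_basis[OF \<open>FD S\<close>] by blast
  have "V.span B \<subseteq> S" using B(1) assms(2) V.span_minimal by blast
  then have "t \<notin> V.span B" using t by blast
  then have "V.independent (insert t B)" using V.independent_insertI B(2) by blast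
  moreover have "insert t B \<subseteq> T" using t B assms(1) by blast
  ultimately have "card (insert t B) \<le> V.dim T" using indep_le assms(3) by blast
  moreover have "t \<notin> B" using B(1) t by blast
  then have "card (insert t B) = card B + 1" using B(5) by simp
  ultimately show False using B assms(4) by simp
qed

lemma dim_psubset:
  fixes S T :: "(nat \<Rightarrow> 'a::field) set"
  assumes "S \<subseteq> T" "S \<noteq> T" "V.subspace S" "FD T" shows "V.dim S < V.dim T"
  using eq_dim[OF assms(1,3,4)] assms(2) by linarith

lemma dim0:
  fixes S :: "(nat \<Rightarrow> 'a::field) set"
  assumes "V.subspace S" "FD S" "V.dim S = 0" shows "S = {0}"
proof -
  have "V.subspace {0::nat \<Rightarrow> 'a}" using V.subspace_span[of "{}"] by simp
  moreover have "{0} \<subseteq> S" using V.subspace_0[OF assms(1)] by simp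
  ultimately show ?thesis using eq_dim[of "{0}" S] assms by simp
qed

lemma grass:
  fixes X Y :: "(nat \<Rightarrow> 'a::field) set"
  assumes "V.subspace X" "V.subspace Y" "FD X" "FD Y"
  shows "V.dim (X \<oplus>\<^sub>P Y) + V.dim (X \<inter> Y) \<le> V.dim X + V.dim Y"
proof -
  obtain C where C: "C \<subseteq> X \<inter> Y" "V.independent C" "X \<inter> Y \<subseteq> V.span C" "card C = V.dim (X \<inter> Y)" "finite C"
  proof -
    have "FD (X \<inter> Y)" using FD_subset[of "X \<inter> Y" X] assms(3) by blast
    then show ?thesis using FD_basis[of "X \<inter> Y"] that by blast
  qed
  obtain B where B: "C \<subseteq> B" "B \<subseteq> X" "V.independent B" "X \<subseteq> V.span B"
    using V.maximal_independent_subset_extend[of C X] C(1,2) by auto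
  have fB: "finite B" using indep_le[OF B(3) B(2) assms(3)] by blast
  have cB: "card B = V.dim X" using V.basis_card_eq_dim B by blast
  obtain D where D: "D \<subseteq> Y" "V.independent D" "Y \<subseteq> V.span D" "card D = V.dim Y" "finite D"
    using FD_basis[OF assms(4)] by metis
  let ?E = "(B - C) \<union> D"
  have sD: "V.span D \<subseteq> V.span ?E" by (rule V.span_mono) blast
  have "B \<subseteq> V.span ?E"
  proof
    fix b assume "b \<in> B"
    show "b \<in> V.span ?E"
    proof (cases "b \<in> C")
      case True then have "b \<in> Y" using C by blast
      then have "b \<in> V.span D" using D(3) by (rule subsetD[rotated])
      then show ?thesis using sD by (rule subsetD[rotated])
    next
      case False then have "b \<in> ?E" using \<open>b \<in> B\<close> by blast
      then show ?thesis by (rule V.span_base)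
    qed
  qed
  then have "V.span B \<subseteq> V.span ?E" by (metis V.span_minimal V.subspace_span)
  then have "X \<union> Y \<subseteq> V.span ?E" using B(4) D(3) sD by blast
  then have "X \<oplus>\<^sub>P Y \<subseteq> V.span ?E" unfolding join_def by (metis V.span_minimal V.subspace_span)
  then have 1: "V.dim (X \<oplus>\<^sub>P Y) \<le> card ?E" using V.dim_le_card[of "X \<oplus>\<^sub>P Y" ?E] fB D(5) by simp
  have 2: "card ?E \<le> card (B - C) + card D" by (rule card_Un_le)
  have 3: "card (B - C) = card B - card C" using B(1) C(5) by (simp add: card_Diff_subset)
  have 4: "card C \<le> card B" using card_mono[OF fB B(1)] .
  show ?thesis using 1 2 3 4 cB C(4) D(4) by linarith
qed


lemma modular:
  fixes A B C :: "(nat \<Rightarrow> 'a::field) set"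
  assumes "V.subspace A" "V.subspace B" "V.subspace C" "A \<subseteq> C"
  shows "(A \<oplus>\<^sub>P B) \<inter> C = A \<oplus>\<^sub>P (B \<inter> C)"
proof
  show "A \<oplus>\<^sub>P (B \<inter> C) \<subseteq> (A \<oplus>\<^sub>P B) \<inter> C"
    unfolding join_def using assms V.span_mono[of "A \<union> (B \<inter> C)" "A \<union> B"]
      V.span_minimal[of "A \<union> (B \<inter> C)" C] by blast
  show "(A \<oplus>\<^sub>P B) \<inter> C \<subseteq> A \<oplus>\<^sub>P (B \<inter> C)"
  proof
    fix v assume v: "v \<in> (A \<oplus>\<^sub>P B) \<inter> C"
    then obtain a b where ab: "v = a + b" "a \<in> V.span A" "b \<in> V.span B"
      unfolding join_def V.span_Un by blast
    have a: "a \<in> A" "b \<in> B" using ab assms(1,2) V.span_eq_iff by blast+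
    have "b = v - a" using ab by simp
    then have "b \<in> C" using v a assms V.subspace_diff by blast
    then show "v \<in> A \<oplus>\<^sub>P (B \<inter> C)" unfolding join_def using ab a
      by (metis IntI UnI1 UnI2 V.span_add V.span_base)
  qed
qed

lemma point_cases:
  fixes P S :: "(nat \<Rightarrow> 'a::field) set"
  assumes "V.subspace P" "V.dim P = 1" "V.subspace S"
  shows "P \<subseteq> S \<or> P \<inter> S = {0}"
proof -
  have fP: "FD P" using FD_dim_pos[of P] assms(2) by simp
  have fI: "FD (P \<inter> S)" by (rule FD_subset[OF _ fP]) auto
  have sI: "V.subspace (P \<inter> S)" by (rule V.subspace_inter[OF assms(1,3)])
  have "V.dim (P \<inter> S) \<le> 1" using dim_mono[of "P \<inter> S" P] fP assms by simp
  then have "V.dim (P \<inter> S) = 0 \<or> V.dim (P \<inter> S) = 1" by linarith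
  then show ?thesis
  proof
    assume "V.dim (P \<inter> S) = 0" then show ?thesis using dim0[OF sI fI] by simp
  next
    assume "V.dim (P \<inter> S) = 1" then have "P \<inter> S = P" using eq_dim[of "P \<inter> S" P] sI fP assms by simp
    then show ?thesis by blast
  qed
qed

lemma subspace_join: "V.subspace ((A::(nat \<Rightarrow> 'a::field) set) \<oplus>\<^sub>P B)"
  unfolding join_def by (rule V.subspace_span)

lemma join_ub1: "V.subspace A \<Longrightarrow> (A::(nat \<Rightarrow> 'a::field) set) \<subseteq> A \<oplus>\<^sub>P B"
  unfolding join_def using V.span_superset[of "A \<union> B"] by auto
lemma join_ub2: "V.subspace B \<Longrightarrow> (B::(nat \<Rightarrow> 'a::field) set) \<subseteq> A \<oplus>\<^sub>P B"
  unfolding join_def using V.span_superset[of "A \<union> B"] by auto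
lemma join_lub: "A \<subseteq> C \<Longrightarrow> B \<subseteq> C \<Longrightarrow> V.subspace C \<Longrightarrow> (A::(nat \<Rightarrow> 'a::field) set) \<oplus>\<^sub>P B \<subseteq> C"
  unfolding join_def by (intro V.span_minimal) auto

lemma join_dim_le:
  fixes X Y :: "(nat \<Rightarrow> 'a::field) set"
  assumes "V.subspace X" "V.subspace Y" "FD X" "FD Y"
  shows "V.dim (X \<oplus>\<^sub>P Y) \<le> V.dim X + V.dim Y"
  using grass[OF assms] by linarith

lemma join_point_dim:
  fixes P S :: "(nat \<Rightarrow> 'a::field) set"
  assumes "V.subspace P" "V.dim P = 1" "V.subspace S" "FD S" "\<not> P \<subseteq> S"
  shows "V.dim (P \<oplus>\<^sub>P S) = V.dim S + 1"
proof -
  have fP: "FD P" using FD_dim_pos[of P] assms(2) by simp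
  have "V.dim (P \<oplus>\<^sub>P S) \<le> V.dim S + 1" using join_dim_le[OF assms(1,3) fP assms(4)] assms by simp
  moreover have "V.dim S < V.dim (P \<oplus>\<^sub>P S)"
  proof (rule dim_psubset)
    show "S \<subseteq> P \<oplus>\<^sub>P S" by (rule join_ub2[OF assms(3)])
    have "P \<subseteq> P \<oplus>\<^sub>P S" by (rule join_ub1[OF assms(1)])
    then show "S \<noteq> P \<oplus>\<^sub>P S" using assms(5) by auto
    show "V.subspace S" by fact
    show "FD (P \<oplus>\<^sub>P S)" by (rule FD_join[OF fP assms(4)])
  qed
  ultimately show ?thesis by linarith
qed




lemma span_Un_left: "V.span (V.span A \<union> B) = V.span ((A::(nat \<Rightarrow> 'a::field) set) \<union> B)"
proof
  have "V.span A \<subseteq> V.span (A \<union> B)" "B \<subseteq> V.span (A \<union> B)"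
    using V.span_mono[of A "A \<union> B"] V.span_superset[of "A \<union> B"] by auto
  then show "V.span (V.span A \<union> B) \<subseteq> V.span (A \<union> B)"
    by (intro V.span_minimal) (auto simp: V.subspace_span)
  have "A \<union> B \<subseteq> V.span A \<union> B" using V.span_superset[of A] by auto
  then show "V.span (A \<union> B) \<subseteq> V.span (V.span A \<union> B)" by (rule V.span_mono)
qed

lemma span_Un_right: "V.span (A \<union> V.span B) = V.span ((A::(nat \<Rightarrow> 'a::field) set) \<union> B)"
  using span_Un_left[of B A] by (simp add: Un_commute)

lemma span_span_Un: "V.span (V.span A \<union> V.span B) = V.span ((A::(nat \<Rightarrow> 'a::field) set) \<union> B)"
  using span_Un_left span_Un_right by metis

lemma join_comm: "(A::(nat \<Rightarrow> 'a::field) set) \<oplus>\<^sub>P B = B \<oplus>\<^sub>P A"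
  unfolding join_def by (simp add: Un_commute)

lemma join_assoc: "((A::(nat \<Rightarrow> 'a::field) set) \<oplus>\<^sub>P B) \<oplus>\<^sub>P C = A \<oplus>\<^sub>P (B \<oplus>\<^sub>P C)"
  unfolding join_def span_Un_left span_Un_right by (simp add: Un_assoc)

lemma join_absorb: "V.subspace W \<Longrightarrow> A \<subseteq> W \<Longrightarrow> (A::(nat \<Rightarrow> 'a::field) set) \<oplus>\<^sub>P W = W"
  using join_lub[of A W W] join_ub2[of W A] by auto

lemma join_zero: "V.subspace S \<Longrightarrow> (S::(nat \<Rightarrow> 'a::field) set) \<oplus>\<^sub>P {0} = S"
  using join_comm[of S "{0}"] join_absorb[of S "{0}"] V.subspace_0 by auto

lemma join_mono: "A \<subseteq> A' \<Longrightarrow> B \<subseteq> B' \<Longrightarrow> (A::(nat \<Rightarrow> 'a::field) set) \<oplus>\<^sub>P B \<subseteq> A' \<oplus>\<^sub>P B'"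
  unfolding join_def by (intro V.span_mono) auto

lemma join_span: "V.span (A::(nat \<Rightarrow> 'a::field) set) \<oplus>\<^sub>P V.span B = V.span (A \<union> B)"
  unfolding join_def by (rule span_span_Un)

lemma dim_suc_decomp:
  fixes X :: "(nat \<Rightarrow> 'a::field) set"
  assumes "V.subspace X" "FD X" "V.dim X = Suc d"
  obtains v X0 where "V.subspace X0" "FD X0" "V.dim X0 = d" "v \<in> X" "v \<notin> X0" "X0 \<subseteq> X"
    "X = V.span {v} \<oplus>\<^sub>P X0"
proof -
  obtain B where B: "B \<subseteq> X" "V.independent B" "X \<subseteq> V.span B" "card B = V.dim X" "finite B"
    using FD_basis[OF assms(2)] by metis
  then have "B \<noteq> {}" using assms(3) by auto
  then obtain v where v: "v \<in> B" by auto
  define X0 where "X0 = V.span (B - {v})"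
  have s0: "V.subspace X0" unfolding X0_def by (rule V.subspace_span)
  have f0: "FD X0" unfolding X0_def FD_def using B(5) by auto
  have i0: "V.independent (B - {v})" using V.independent_mono[OF B(2)] by auto
  have d0: "V.dim X0 = d" unfolding X0_def using V.dim_span_eq_card_independent[OF i0] B(4,5) v assms(3) by simp
  have vX: "v \<in> X" using v B(1) by auto
  have vn: "v \<notin> X0" unfolding X0_def using B(2) v V.dependent_def by auto
  have spX: "V.span X = X" using assms(1) by simp
  have sub: "X0 \<subseteq> X" unfolding X0_def using V.span_mono[of "B - {v}" X] B(1) spX by auto
  have "V.span {v} \<oplus>\<^sub>P X0 = V.span ({v} \<union> (B - {v}))" unfolding X0_def by (rule join_span)
  also have "{v} \<union> (B - {v}) = B" using v by auto
  also have "V.span B = X"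
  proof
    show "V.span B \<subseteq> X" using V.span_minimal[OF B(1) assms(1)] .
    show "X \<subseteq> V.span B" by (rule B(3))
  qed
  finally have "V.span {v} \<oplus>\<^sub>P X0 = X" .
  then show ?thesis using that[OF s0 f0 d0 vX vn sub] by simp
qed

lemma point_span:
  assumes "(v::nat \<Rightarrow> 'a::field) \<noteq> 0"
  shows "V.subspace (V.span {v})" "V.dim (V.span {v}) = 1" "FD (V.span {v})"
proof -
  show "V.subspace (V.span {v})" by (rule V.subspace_span)
  have "V.independent {v}" using assms by simp
  then show "V.dim (V.span {v}) = 1" using V.dim_span_eq_card_independent by fastforce
  show "FD (V.span {v})" unfolding FD_def by (intro exI[of _ "{v}"]) auto
qed

lemma grass_ge:
  fixes X Y :: "(nat \<Rightarrow> 'a::field) set"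
  assumes "V.subspace X" "V.subspace Y" "FD X" "FD Y"
  shows "V.dim X + V.dim Y \<le> V.dim (X \<oplus>\<^sub>P Y) + V.dim (X \<inter> Y)"
  using assms
proof (induction "V.dim X" arbitrary: X)
  case 0
  from 0 have h: "V.subspace X" "FD X" "V.dim X = 0" by simp_all
  then have "X = {0}" using dim0 by blast
  moreover have "{0} \<inter> Y = {0}" using V.subspace_0[OF 0(3)] by auto
  ultimately show ?case using join_comm[of X Y] join_zero[OF 0(3)] by simp
next
  case (Suc d)
  obtain v X0 where X0: "V.subspace X0" "FD X0" "V.dim X0 = d" "v \<in> X" "v \<notin> X0" "X0 \<subseteq> X"
    "X = V.span {v} \<oplus>\<^sub>P X0"
    by (rule dim_suc_decomp[OF Suc(3) Suc(5) Suc(2)[symmetric]])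
  have IH: "V.dim X0 + V.dim Y \<le> V.dim (X0 \<oplus>\<^sub>P Y) + V.dim (X0 \<inter> Y)"
    using Suc(1)[OF X0(3)[symmetric] X0(1) Suc(4) X0(2) Suc(6)] .
  have v0: "v \<noteq> 0" using X0(5) V.subspace_0[OF X0(1)] by auto
  note pv = point_span[OF v0]
  have XY: "X \<oplus>\<^sub>P Y = V.span {v} \<oplus>\<^sub>P (X0 \<oplus>\<^sub>P Y)" by (subst X0(7)) (rule join_assoc)
  have fXY: "FD (X \<inter> Y)" by (rule FD_subset[OF _ Suc(5)]) auto
  have f0Y: "FD (X0 \<oplus>\<^sub>P Y)" by (rule FD_join[OF X0(2) Suc(6)])
  show ?case
  proof (cases "v \<in> X0 \<oplus>\<^sub>P Y")
    case True
    have "V.span {v} \<subseteq> X0 \<oplus>\<^sub>P Y" using True subspace_join V.span_minimal[of "{v}" "X0 \<oplus>\<^sub>P Y"] by auto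
    then have e: "X \<oplus>\<^sub>P Y = X0 \<oplus>\<^sub>P Y" using XY join_absorb[OF subspace_join] by simp
    obtain a b where ab: "v = a + b" "a \<in> V.span X0" "b \<in> V.span Y"
      using True unfolding join_def V.span_Un by auto
    have a: "a \<in> X0" "b \<in> Y" using ab V.span_eq_iff[THEN iffD2, OF X0(1)] V.span_eq_iff[THEN iffD2, OF Suc(4)] by auto
    have "b = v - a" using ab by simp
    then have bX: "b \<in> X" using V.subspace_diff[OF Suc(3) X0(4)] a X0(6) by auto
    have bn: "b \<notin> X0"
    proof
      assume "b \<in> X0" then have "a + b \<in> X0" using V.subspace_add[OF X0(1)] a by auto
      then show False using ab X0(5) by simp
    qed
    have "V.dim (X0 \<inter> Y) < V.dim (X \<inter> Y)"
    proof (rule dim_psubset)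
      show "X0 \<inter> Y \<subseteq> X \<inter> Y" using X0(6) by auto
      show "X0 \<inter> Y \<noteq> X \<inter> Y" using bX bn a by auto
      show "V.subspace (X0 \<inter> Y)" by (rule V.subspace_inter[OF X0(1) Suc(4)])
      show "FD (X \<inter> Y)" by fact
    qed
    moreover have "V.dim (X \<oplus>\<^sub>P Y) = V.dim (X0 \<oplus>\<^sub>P Y)" using e by simp
    ultimately show ?thesis using IH X0(3) Suc(2) by linarith
  next
    case False
    have "\<not> V.span {v} \<subseteq> X0 \<oplus>\<^sub>P Y" using False V.span_superset[of "{v}"] by auto
    then have "V.dim (V.span {v} \<oplus>\<^sub>P (X0 \<oplus>\<^sub>P Y)) = V.dim (X0 \<oplus>\<^sub>P Y) + 1"
      using join_point_dim[OF pv(1,2) subspace_join f0Y] by simp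
    moreover have "V.dim (X0 \<inter> Y) \<le> V.dim (X \<inter> Y)"
      by (rule dim_mono[OF _ fXY]) (use X0(6) in auto)
    moreover have "V.dim (X \<oplus>\<^sub>P Y) = V.dim (V.span {v} \<oplus>\<^sub>P (X0 \<oplus>\<^sub>P Y))" using XY by simp
    ultimately show ?thesis using IH X0(3) Suc(2) by linarith
  qed
qed




lemma dim_zero: "V.dim {0::nat \<Rightarrow> 'a::field} = 0"
  using V.dim_span[of "{}::(nat \<Rightarrow> 'a) set"] V.dim_eq_card_independent[OF V.independent_empty] by simp

lemma GL:
  fixes S z1 z2 T S1 S2 :: "(nat \<Rightarrow> 'a::field) set"
  assumes sS: "V.subspace S"
    and z1: "V.subspace z1" "V.dim z1 = 1" "z1 \<inter> S = {0}"
    and z2: "V.subspace z2" "V.dim z2 = 1" "z2 \<inter> S = {0}"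
    and T: "V.subspace T" "FD T" "T \<subseteq> S" "z2 \<subseteq> z1 \<oplus>\<^sub>P T" "V.dim T \<le> r + 1"
    and S12: "V.subspace S1" "V.subspace S2" "S1 \<subseteq> T" "S2 \<subseteq> T" "V.dim S1 = r" "V.dim S2 = r" "S1 \<noteq> S2"
  shows "V.dim ((z1 \<oplus>\<^sub>P S1) \<inter> (z2 \<oplus>\<^sub>P S2)) = r"
    "(z1 \<oplus>\<^sub>P S1) \<inter> S = S1" "(z2 \<oplus>\<^sub>P S2) \<inter> S = S2"
    "\<not> ((z1 \<oplus>\<^sub>P S1) \<inter> (z2 \<oplus>\<^sub>P S2) \<subseteq> S)"
    "V.dim (z1 \<oplus>\<^sub>P S1) = r + 1" "V.dim (z2 \<oplus>\<^sub>P S2) = r + 1"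
proof -
  let ?U = "z1 \<oplus>\<^sub>P S1" and ?W = "z2 \<oplus>\<^sub>P S2"
  have fS1: "FD S1" using FD_subset[OF S12(3) T(2)] .
  have fS2: "FD S2" using FD_subset[OF S12(4) T(2)] .
  have fz1: "FD z1" using FD_dim_pos[of z1] z1(2) by simp
  have fz2: "FD z2" using FD_dim_pos[of z2] z2(2) by simp
  have S1S: "S1 \<subseteq> S" using S12(3) T(3) by auto
  have S2S: "S2 \<subseteq> S" using S12(4) T(3) by auto
  have m1: "?U \<inter> S = S1"
  proof -
    have "?U \<inter> S = (S1 \<oplus>\<^sub>P z1) \<inter> S" by (simp add: join_comm)
    also have "\<dots> = S1 \<oplus>\<^sub>P (z1 \<inter> S)" by (rule modular[OF S12(1) z1(1) sS S1S])
    also have "\<dots> = S1" using z1(3) join_zero[OF S12(1)] by simp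
    finally show ?thesis .
  qed
  have m2: "?W \<inter> S = S2"
  proof -
    have "?W \<inter> S = (S2 \<oplus>\<^sub>P z2) \<inter> S" by (simp add: join_comm)
    also have "\<dots> = S2 \<oplus>\<^sub>P (z2 \<inter> S)" by (rule modular[OF S12(2) z2(1) sS S2S])
    also have "\<dots> = S2" using z2(3) join_zero[OF S12(2)] by simp
    finally show ?thesis .
  qed
  have nz1: "\<not> z1 \<subseteq> S1"
  proof
    assume "z1 \<subseteq> S1" then have "z1 = {0}" using z1(3) S1S by auto
    then show False using z1(2) dim_zero by (metis zero_neq_one)
  qed
  have nz2: "\<not> z2 \<subseteq> S2"
  proof
    assume "z2 \<subseteq> S2" then have "z2 = {0}" using z2(3) S2S by auto
    then show False using z2(2) dim_zero by (metis zero_neq_one)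
  qed
  show dU: "V.dim ?U = r + 1" using join_point_dim[OF z1(1,2) S12(1) fS1 nz1] S12(5) by simp
  show dW: "V.dim ?W = r + 1" using join_point_dim[OF z2(1,2) S12(2) fS2 nz2] S12(6) by simp
  have UW: "?U \<noteq> ?W" using m1 m2 S12(7) by metis
  have sU: "V.subspace ?U" "V.subspace ?W" by (rule subspace_join)+
  have fU: "FD ?U" "FD ?W" using FD_join fz1 fz2 fS1 fS2 by blast+
  have sZ: "V.subspace (z1 \<oplus>\<^sub>P T)" by (rule subspace_join)
  have fZ: "FD (z1 \<oplus>\<^sub>P T)" by (rule FD_join[OF fz1 T(2)])
  have "?U \<subseteq> z1 \<oplus>\<^sub>P T" by (rule join_mono[OF subset_refl S12(3)])
  moreover have "?W \<subseteq> z1 \<oplus>\<^sub>P T"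
    by (rule join_lub[OF T(4) _ sZ]) (use S12(4) join_ub2[OF T(1), of z1] in auto)
  ultimately have "?U \<oplus>\<^sub>P ?W \<subseteq> z1 \<oplus>\<^sub>P T" using join_lub sZ by blast
  then have "V.dim (?U \<oplus>\<^sub>P ?W) \<le> V.dim (z1 \<oplus>\<^sub>P T)" using dim_mono fZ by blast
  also have "\<dots> \<le> V.dim z1 + V.dim T" by (rule join_dim_le[OF z1(1) T(1) fz1 T(2)])
  finally have dUW: "V.dim (?U \<oplus>\<^sub>P ?W) \<le> r + 2" using z1(2) T(5) by linarith
  have "V.dim ?U + V.dim ?W \<le> V.dim (?U \<oplus>\<^sub>P ?W) + V.dim (?U \<inter> ?W)"
    by (rule grass_ge[OF sU fU])
  then have ge: "r \<le> V.dim (?U \<inter> ?W)" using dU dW dUW by linarith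
  have sI: "V.subspace (?U \<inter> ?W)" using V.subspace_inter sU by blast
  have ne: "?U \<inter> ?W \<noteq> ?U"
  proof
    assume "?U \<inter> ?W = ?U"
    then have "?U \<subseteq> ?W" by blast
    then have "?U = ?W" using eq_dim[of ?U ?W] sU fU dU dW by simp
    then show False using UW by simp
  qed
  have "V.dim (?U \<inter> ?W) < V.dim ?U" by (rule dim_psubset[OF _ ne sI fU(1)]) auto
  then show d: "V.dim (?U \<inter> ?W) = r" using ge dU by linarith
  show "?U \<inter> S = S1" by (rule m1)
  show "?W \<inter> S = S2" by (rule m2)
  show "\<not> (?U \<inter> ?W \<subseteq> S)"
  proof
    assume "?U \<inter> ?W \<subseteq> S"
    then have sub: "?U \<inter> ?W \<subseteq> S1 \<inter> S2" using m1 m2 by blast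
    have ne12: "S1 \<inter> S2 \<noteq> S1"
    proof
      assume "S1 \<inter> S2 = S1" then have "S1 \<subseteq> S2" by blast
      then have "S1 = S2" using eq_dim[of S1 S2] S12 fS2 by simp
      then show False using S12(7) by simp
    qed
    have "V.dim (S1 \<inter> S2) < V.dim S1"
      by (rule dim_psubset[OF _ ne12 V.subspace_inter[OF S12(1,2)] fS1]) auto
    moreover have "V.dim (?U \<inter> ?W) \<le> V.dim (S1 \<inter> S2)"
      by (rule dim_mono[OF sub]) (rule FD_subset[OF _ fS1], auto)
    ultimately show False using d S12(5) by linarith
  qed
qed




definition XI :: "(nat \<Rightarrow> (nat \<Rightarrow> 'a::field) set) \<Rightarrow> nat set \<Rightarrow> (nat \<Rightarrow> 'a) set" where
  "XI x I = vspan (\<Union>i\<in>I. x i)"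

lemma Sigma_XI: "Sigma_sp x k = XI x {0..k}" unfolding Sigma_sp_def XI_def ..
lemma pi_XI: "pi_sp x k = XI x {1..k}" unfolding pi_sp_def XI_def ..

lemma XI_sub: "V.subspace (XI x I)" unfolding XI_def by (rule V.subspace_span)

lemma XI_mono: "I \<subseteq> K \<Longrightarrow> XI x I \<subseteq> XI x K"
  unfolding XI_def by (intro V.span_mono) auto

lemma XI_join: "XI x I \<oplus>\<^sub>P XI x K = XI x (I \<union> K)"
  unfolding XI_def join_span by (simp add: UN_Un)

lemma XI_empty: "XI x {} = {0}" unfolding XI_def by simp

lemma gp_pt:
  assumes gp: "general_position n x" and "i \<le> n"
  shows "V.subspace (x i)" "V.dim (x i) = 1" "x i \<subseteq> ambient n"
  using gp assms(2) unfolding general_position_def psub_def by auto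

lemma XI_single:
  assumes gp: "general_position n x" and "i \<le> n"
  shows "XI x {i} = x i"
  unfolding XI_def using gp_pt[OF assms] by simp

lemma XI_dim:
  assumes gp: "general_position n x" and "I \<subseteq> {0..n}"
  shows "V.dim (XI x I) = card I"
  using gp assms(2) unfolding general_position_def XI_def by auto

lemma XI_FD:
  assumes gp: "general_position n x" and "I \<subseteq> {0..n}"
  shows "FD (XI x I)"
proof (cases "I = {}")
  case True then show ?thesis unfolding FD_def XI_def by (intro exI[of _ "{}"]) auto
next
  case False
  have "finite I" using assms(2) finite_subset by blast
  then have "card I \<noteq> 0" using False by simp
  then show ?thesis using FD_dim_pos XI_dim[OF assms] by metis
qed

lemma XI_Int:
  assumes gp: "general_position n x" and I: "I \<subseteq> {0..n}" and K: "K \<subseteq> {0..n}"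
  shows "XI x I \<inter> XI x K = XI x (I \<inter> K)"
proof -
  have fI: "finite I" "finite K" using I K finite_subset by blast+
  have "V.dim (XI x I \<oplus>\<^sub>P XI x K) + V.dim (XI x I \<inter> XI x K) \<le> V.dim (XI x I) + V.dim (XI x K)"
    by (rule grass[OF XI_sub XI_sub XI_FD[OF gp I] XI_FD[OF gp K]])
  moreover have "V.dim (XI x I \<oplus>\<^sub>P XI x K) = card (I \<union> K)"
    unfolding XI_join using XI_dim[OF gp] I K by auto
  moreover have "card (I \<union> K) + card (I \<inter> K) = card I + card K" using card_Un_Int fI by metis
  moreover have "V.dim (XI x (I \<inter> K)) = card (I \<inter> K)" by (rule XI_dim[OF gp]) (use I in auto)
  ultimately have le: "V.dim (XI x I \<inter> XI x K) \<le> V.dim (XI x (I \<inter> K))"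
    using XI_dim[OF gp I] XI_dim[OF gp K] by linarith
  have sub: "XI x (I \<inter> K) \<subseteq> XI x I \<inter> XI x K" using XI_mono[of "I \<inter> K" I x] XI_mono[of "I \<inter> K" K x] by auto
  have fd: "FD (XI x I \<inter> XI x K)" by (rule FD_subset[OF _ XI_FD[OF gp I]]) auto
  show ?thesis using eq_dim[OF sub XI_sub fd le] by simp
qed




lemma ambient_sub: "V.subspace (ambient n :: (nat \<Rightarrow> 'a::field) set)"
  unfolding V.subspace_def ambient_def fscale_def by auto

lemma two_last: "2 \<le> length J \<Longrightarrow> \<exists>J0 b a. J = J0 @ [b, a]"
proof (cases J rule: rev_exhaust)
  case Nil then show "2 \<le> length J \<Longrightarrow> ?thesis" by simp
next
  case (snoc ys a)
  assume "2 \<le> length J"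
  then have "ys \<noteq> []" using snoc by auto
  then obtain J0 b where "ys = J0 @ [b]" by (cases ys rule: rev_exhaust) auto
  then show ?thesis using snoc by auto
qed

locale S2 =
  fixes n m :: nat and x y l :: "nat \<Rightarrow> (nat \<Rightarrow> 'a::field) set"
  assumes n2: "n \<ge> 2"
    and gp: "general_position n x"
    and y_pt: "\<And>i. 3 \<le> i \<Longrightarrow> i \<le> n \<Longrightarrow>
        ppoint n (y i) \<and> y i \<subseteq> x (i - 1) \<oplus>\<^sub>P x i \<and> y i \<noteq> x (i - 1) \<and> y i \<noteq> x i"
    and l_line: "\<And>i. i \<in> {1..m} \<Longrightarrow> pline n (l i) \<and> l i \<subseteq> Sigma_sp x 2"
    and l_meet: "\<And>i. i \<in> {1..m} \<Longrightarrow> ppoint n (l i \<inter> pi_sp x 2) \<and> l i \<inter> pi_sp x 2 \<noteq> x 2"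
    and l_dist: "\<And>i j. i \<in> {1..m} \<Longrightarrow> j \<in> {1..m} \<Longrightarrow> i \<noteq> j \<Longrightarrow>
        l i \<inter> pi_sp x 2 \<noteq> l j \<inter> pi_sp x 2"
begin

abbreviation "Sg k \<equiv> Sigma_sp x k"
abbreviation "Pi k \<equiv> pi_sp x k"
abbreviation "L J \<equiv> ellJ x y l J"
abbreviation "P J \<equiv> pJ x y l J"

lemma xp:
  assumes "i \<le> n" shows "V.subspace (x i)" "V.dim (x i) = 1" "FD (x i)"
  using gp_pt[OF gp assms] FD_dim_pos[of "x i"] by auto

lemma Sg_sub: "V.subspace (Sg k)" "V.subspace (Pi k)"
  unfolding Sigma_XI pi_XI by (rule XI_sub)+

lemma Sg_FD: "k \<le> n \<Longrightarrow> FD (Sg k)" "k \<le> n \<Longrightarrow> FD (Pi k)"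
  unfolding Sigma_XI pi_XI by (rule XI_FD[OF gp]; auto)+

lemma Sg_dim: "k \<le> n \<Longrightarrow> V.dim (Sg k) = k + 1" "k \<le> n \<Longrightarrow> V.dim (Pi k) = k"
  unfolding Sigma_XI pi_XI by (subst XI_dim[OF gp]; auto)+

lemma Sg_mono: "i \<le> j \<Longrightarrow> Sg i \<subseteq> Sg j" "i \<le> j \<Longrightarrow> Pi i \<subseteq> Pi j" "Pi k \<subseteq> Sg k"
  unfolding Sigma_XI pi_XI by (rule XI_mono; auto)+

lemma x_in: "i \<le> k \<Longrightarrow> k \<le> n \<Longrightarrow> x i \<subseteq> Sg k" "1 \<le> i \<Longrightarrow> i \<le> k \<Longrightarrow> k \<le> n \<Longrightarrow> x i \<subseteq> Pi k"
proof -
  assume "i \<le> k" "k \<le> n"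
  then show "x i \<subseteq> Sg k" unfolding Sigma_XI using XI_single[OF gp, of i] XI_mono[of "{i}" "{0..k}" x] by auto
next
  assume "1 \<le> i" "i \<le> k" "k \<le> n"
  then show "x i \<subseteq> Pi k" unfolding pi_XI using XI_single[OF gp, of i] XI_mono[of "{i}" "{1..k}" x] by auto
qed

lemma x_Sg: "k + 1 \<le> n \<Longrightarrow> x (k + 1) \<inter> Sg k = {0}"
  unfolding Sigma_XI using XI_single[OF gp, of "k+1"] XI_Int[OF gp, of "{k+1}" "{0..k}"] XI_empty[of x] by auto

lemma Sg_Pi: "k + 1 \<le> n \<Longrightarrow> Sg k \<inter> Pi (k + 1) = Pi k"
proof -
  assume "k + 1 \<le> n"
  moreover have "{0..k} \<inter> {1..k+1} = {1..k}" by auto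
  ultimately show ?thesis unfolding Sigma_XI pi_XI using XI_Int[OF gp, of "{0..k}" "{1..k+1}"] by auto
qed

lemma xx_join: "a \<le> n \<Longrightarrow> b \<le> n \<Longrightarrow> x a \<oplus>\<^sub>P x b = XI x {a, b}"
proof -
  assume "a \<le> n" "b \<le> n"
  moreover have "{a} \<union> {b} = {a, b}" by auto
  ultimately show ?thesis using XI_single[OF gp, of a] XI_single[OF gp, of b] XI_join[of x "{a}" "{b}"] by metis
qed

lemma xx_Sg: "1 \<le> k \<Longrightarrow> k + 1 \<le> n \<Longrightarrow> (x k \<oplus>\<^sub>P x (k + 1)) \<inter> Sg k = x k"
proof -
  assume k: "1 \<le> k" "k + 1 \<le> n"
  have "{k, k+1} \<inter> {0..k} = {k}" by auto
  then show ?thesis unfolding Sigma_XI using k xx_join[of k "k+1"] XI_Int[OF gp, of "{k, k+1}" "{0..k}"]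
      XI_single[OF gp, of k] by auto
qed

lemma xx_dim: "1 \<le> k \<Longrightarrow> k + 1 \<le> n \<Longrightarrow> V.dim (x k \<oplus>\<^sub>P x (k + 1)) = 2"
  using xx_join[of k "k+1"] XI_dim[OF gp, of "{k, k+1}"] by auto

lemma yp:
  assumes K: "2 \<le> K" "K + 1 \<le> n"
  shows "V.subspace (y (K+1))" "V.dim (y (K+1)) = 1" "FD (y (K+1))"
    "y (K+1) \<inter> Sg K = {0}" "y (K+1) \<subseteq> x (K+1) \<oplus>\<^sub>P x K" "x K \<subseteq> x (K+1) \<oplus>\<^sub>P y (K+1)"
    "y (K+1) \<subseteq> Pi (K+1)"
proof -
  have Y: "ppoint n (y (K+1))" "y (K+1) \<subseteq> x K \<oplus>\<^sub>P x (K+1)" "y (K+1) \<noteq> x K" "y (K+1) \<noteq> x (K+1)"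
    using y_pt[of "K+1"] K by auto
  show s: "V.subspace (y (K+1))" and d: "V.dim (y (K+1)) = 1" using Y(1) unfolding psub_def by auto
  show f: "FD (y (K+1))" using FD_dim_pos[of "y (K+1)"] d by simp
  show "y (K+1) \<subseteq> x (K+1) \<oplus>\<^sub>P x K" using Y(2) join_comm by metis
  have xK: "V.subspace (x K)" "V.dim (x K) = 1" "FD (x K)" using xp K by auto
  have xK1: "V.subspace (x (K+1))" "V.dim (x (K+1)) = 1" "FD (x (K+1))" using xp K by auto
  show "y (K+1) \<inter> Sg K = {0}"
  proof -
    have "y (K+1) \<subseteq> Sg K \<or> y (K+1) \<inter> Sg K = {0}" by (rule point_cases[OF s d Sg_sub(1)])
    moreover have "\<not> y (K+1) \<subseteq> Sg K"
    proof
      assume "y (K+1) \<subseteq> Sg K"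
      then have "y (K+1) \<subseteq> x K" using Y(2) xx_Sg[of K] K by auto
      then have "y (K+1) = x K" using eq_dim[of "y (K+1)" "x K"] s xK d by simp
      then show False using Y(3) by simp
    qed
    ultimately show ?thesis by simp
  qed
  have xxs: "V.subspace (x K \<oplus>\<^sub>P x (K+1))" by (rule subspace_join)
  have W: "x (K+1) \<oplus>\<^sub>P y (K+1) \<subseteq> x K \<oplus>\<^sub>P x (K+1)"
    by (rule join_lub[OF join_ub2[OF xK1(1)] Y(2) xxs])
  have nxy: "\<not> x (K+1) \<subseteq> y (K+1)"
  proof
    assume "x (K+1) \<subseteq> y (K+1)"
    then have "x (K+1) = y (K+1)" using eq_dim[of "x (K+1)" "y (K+1)"] xK1 f d by simp
    then show False using Y(4) by simp
  qed
  have dW: "V.dim (x (K+1) \<oplus>\<^sub>P y (K+1)) = 2" using join_point_dim[OF xK1(1,2) s f nxy] d by simp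
  have "x (K+1) \<oplus>\<^sub>P y (K+1) = x K \<oplus>\<^sub>P x (K+1)"
    using eq_dim[OF W subspace_join FD_join[OF xK(3) xK1(3)]] dW xx_dim[of K] K by simp
  then show "x K \<subseteq> x (K+1) \<oplus>\<^sub>P y (K+1)" using join_ub1[OF xK(1), of "x (K+1)"] by simp
  have "x K \<oplus>\<^sub>P x (K+1) \<subseteq> Pi (K+1)"
    by (rule join_lub[OF x_in(2) x_in(2) Sg_sub(2)]) (use K in auto)
  then show "y (K+1) \<subseteq> Pi (K+1)" using Y(2) by auto
qed

lemma rec_L: "2 \<le> length J \<Longrightarrow> L J = (x (length J + 1) \<oplus>\<^sub>P L (butlast J)) \<inter>
    (y (length J + 1) \<oplus>\<^sub>P L (butlast (butlast J) @ [last J]))"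
  unfolding ellJ_def by (subst rec_sp.simps) simp

lemma rec_P: "2 \<le> length J \<Longrightarrow> P J = (x (length J + 1) \<oplus>\<^sub>P P (butlast J)) \<inter>
    (y (length J + 1) \<oplus>\<^sub>P P (butlast (butlast J) @ [last J]))"
  unfolding pJ_def by (subst rec_sp.simps) simp

lemma base_LP: "length J = 1 \<Longrightarrow> L J = l (hd J) \<and> P J = l (hd J) \<inter> Pi 2"
  unfolding ellJ_def pJ_def by (subst (1 2) rec_sp.simps) simp

end




context S2 begin

definition good :: "nat \<Rightarrow> nat list \<Rightarrow> bool" where
  "good k J \<longleftrightarrow> V.subspace (L J) \<and> V.dim (L J) = 2 \<and> L J \<subseteq> Sg (k+1) \<and> (2 \<le> k \<longrightarrow> \<not> L J \<subseteq> Sg k) \<and>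
     V.subspace (P J) \<and> V.dim (P J) = 1 \<and> P J \<subseteq> Pi (k+1) \<and> (2 \<le> k \<longrightarrow> \<not> P J \<subseteq> Pi k) \<and>
     L J \<inter> Pi (k+1) = P J \<and> P J \<noteq> x (k+1)"

definition Inv :: "nat \<Rightarrow> bool" where
  "Inv k \<longleftrightarrow> (\<forall>J. ordered_subset m J \<and> length J = k \<longrightarrow> good k J) \<and>
     (\<forall>J J'. ordered_subset m J \<and> length J = k \<and> ordered_subset m J' \<and> length J' = k \<and> P J = P J' \<longrightarrow> J = J')"

lemma Inv1: "Inv 1"
  unfolding Inv_def
proof (intro conjI allI impI)
  fix J assume J: "ordered_subset m J \<and> length J = 1"
  then obtain a where a: "J = [a]" by (cases J) auto
  then have am: "a \<in> {1..m}" using J unfolding ordered_subset_def by auto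
  have LP: "L J = l a" "P J = l a \<inter> Pi 2" using base_LP[of J] a by auto
  show "good 1 J" unfolding good_def LP one_add_one using l_line[OF am] l_meet[OF am] unfolding psub_def by auto
next
  fix J J' assume J: "ordered_subset m J \<and> length J = 1 \<and> ordered_subset m J' \<and> length J' = 1 \<and> P J = P J'"
  then obtain a a' where a: "J = [a]" "J' = [a']" by (cases J; cases J') auto
  then have am: "a \<in> {1..m}" "a' \<in> {1..m}" using J unfolding ordered_subset_def by auto
  have "l a \<inter> Pi 2 = l a' \<inter> Pi 2" using J base_LP[of J] base_LP[of J'] a by auto
  then have "a = a'" using l_dist[OF am] by auto
  then show "J = J'" using a by simp
qed

lemma step_good:
  assumes K: "2 \<le> K" "K + 1 \<le> n" and I1: "Inv (K - 1)" and I2: "3 \<le> K \<Longrightarrow> Inv (K - 2)"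
    and J: "ordered_subset m J" "length J = K"
  shows "good K J" "(x (K+1) \<oplus>\<^sub>P P J) \<inter> Sg K = P (butlast J)"
    "(y (K+1) \<oplus>\<^sub>P P J) \<inter> Sg K = P (butlast (butlast J) @ [last J])"
proof -
  obtain J0 b a where Jd: "J = J0 @ [b, a]" using two_last[of J] J(2) K by auto
  define A where "A = J0 @ [b]"
  define B where "B = J0 @ [a]"
  have bA: "butlast J = A" "butlast (butlast J) @ [last J] = B" by (simp_all add: Jd A_def B_def butlast_append)
  have lA: "length A = K - 1" "length B = K - 1" using J(2) Jd A_def B_def by auto
  have oA: "ordered_subset m A" "ordered_subset m B" using J(1) Jd A_def B_def unfolding ordered_subset_def by auto
  have ab: "a \<noteq> b" using J(1) Jd unfolding ordered_subset_def by auto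
  then have AB: "A \<noteq> B" using A_def B_def by auto
  have K1: "K - 1 + 1 = K" using K by simp
  have gA: "good (K - 1) A" "good (K - 1) B" using I1 oA lA unfolding Inv_def by auto
  then have gA': "V.subspace (L A)" "V.dim (L A) = 2" "L A \<subseteq> Sg K" "V.subspace (P A)" "V.dim (P A) = 1"
      "P A \<subseteq> Pi K" "L A \<inter> Pi K = P A" "P A \<noteq> x K"
    "V.subspace (L B)" "V.dim (L B) = 2" "L B \<subseteq> Sg K" "V.subspace (P B)" "V.dim (P B) = 1"
      "P B \<subseteq> Pi K" "L B \<inter> Pi K = P B" "P B \<noteq> x K"
    unfolding good_def K1 by auto
  have PAB: "P A \<noteq> P B" using I1 oA lA AB unfolding Inv_def by metis
  have LAB: "L A \<noteq> L B" using PAB gA'(7,15) by metis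
  have LJ: "L J = (x (K+1) \<oplus>\<^sub>P L A) \<inter> (y (K+1) \<oplus>\<^sub>P L B)" using rec_L[of J] J(2) K bA by simp
  have PJ: "P J = (x (K+1) \<oplus>\<^sub>P P A) \<inter> (y (K+1) \<oplus>\<^sub>P P B)" using rec_P[of J] J(2) K bA by simp
  have xK: "V.subspace (x K)" "V.dim (x K) = 1" "FD (x K)" using xp K by auto
  have xK1: "V.subspace (x (K+1))" "V.dim (x (K+1)) = 1" "FD (x (K+1))" using xp K by auto
  have xS: "x (K+1) \<inter> Sg K = {0}" using x_Sg K by simp
  note Y = yp[OF K]
  obtain TL TP where TL: "V.subspace TL" "FD TL" "TL \<subseteq> Sg K" "x K \<subseteq> TL" "V.dim TL \<le> 3" "L A \<subseteq> TL" "L B \<subseteq> TL"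
    and TP: "V.subspace TP" "FD TP" "TP \<subseteq> Pi K" "x K \<subseteq> TP" "V.dim TP \<le> 2" "P A \<subseteq> TP" "P B \<subseteq> TP"
  proof (cases "K = 2")
    case True
    show ?thesis
    proof (rule that[of "Sg 2" "Pi 2"])
      show "V.subspace (Sg 2)" "V.subspace (Pi 2)" by (rule Sg_sub)+
      show "FD (Sg 2)" "FD (Pi 2)" using Sg_FD K True by auto
      show "Sg 2 \<subseteq> Sg K" "Pi 2 \<subseteq> Pi K" using True by auto
      show "x K \<subseteq> Sg 2" "x K \<subseteq> Pi 2" using x_in K True by auto
      show "V.dim (Sg 2) \<le> 3" "V.dim (Pi 2) \<le> 2" using Sg_dim K True by auto
      show "L A \<subseteq> Sg 2" "L B \<subseteq> Sg 2" "P A \<subseteq> Pi 2" "P B \<subseteq> Pi 2" using gA' True by auto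
    qed
  next
    case False
    then have K3: "3 \<le> K" using K by simp
    have lJ0: "length J0 = K - 2" using J(2) Jd by simp
    have oJ0: "ordered_subset m J0" using J(1) Jd unfolding ordered_subset_def by auto
    have g0: "good (K - 2) J0" using I2[OF K3] oJ0 lJ0 unfolding Inv_def by auto
    have K2: "K - 2 + 1 = K - 1" using K3 by simp
    have g0': "V.subspace (L J0)" "V.dim (L J0) = 2" "L J0 \<subseteq> Sg (K - 1)"
       "V.subspace (P J0)" "V.dim (P J0) = 1" "P J0 \<subseteq> Pi (K - 1)"
      using g0 unfolding good_def K2 by auto
    have f0: "FD (L J0)" "FD (P J0)" using FD_dim_pos[of "L J0"] FD_dim_pos[of "P J0"] g0'(2,5) by auto
    have bAB: "butlast A = J0" "butlast B = J0"
      by (simp_all add: A_def B_def butlast_append)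
    have lA2: "2 \<le> length A" "2 \<le> length B" using lA K3 by auto
    have LA0: "L A \<subseteq> x K \<oplus>\<^sub>P L J0" "L B \<subseteq> x K \<oplus>\<^sub>P L J0"
      using rec_L[OF lA2(1)] rec_L[OF lA2(2)] bAB lA K1 by auto
    have PA0: "P A \<subseteq> x K \<oplus>\<^sub>P P J0" "P B \<subseteq> x K \<oplus>\<^sub>P P J0"
      using rec_P[OF lA2(1)] rec_P[OF lA2(2)] bAB lA K1 by auto
    show ?thesis
    proof (rule that[of "x K \<oplus>\<^sub>P L J0" "x K \<oplus>\<^sub>P P J0"])
      show "V.subspace (x K \<oplus>\<^sub>P L J0)" "V.subspace (x K \<oplus>\<^sub>P P J0)" by (rule subspace_join)+
      show "FD (x K \<oplus>\<^sub>P L J0)" "FD (x K \<oplus>\<^sub>P P J0)" using FD_join xK(3) f0 by auto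
      show "x K \<oplus>\<^sub>P L J0 \<subseteq> Sg K"
        by (rule join_lub[OF x_in(1) _ Sg_sub(1)]) (use K g0'(3) Sg_mono(1)[of "K - 1" K] in auto)
      show "x K \<oplus>\<^sub>P P J0 \<subseteq> Pi K"
        by (rule join_lub[OF x_in(2) _ Sg_sub(2)]) (use K g0'(6) Sg_mono(2)[of "K - 1" K] in auto)
      show "x K \<subseteq> x K \<oplus>\<^sub>P L J0" "x K \<subseteq> x K \<oplus>\<^sub>P P J0" by (rule join_ub1[OF xK(1)])+
      show "V.dim (x K \<oplus>\<^sub>P L J0) \<le> 3" using join_dim_le[OF xK(1) g0'(1) xK(3) f0(1)] xK(2) g0'(2) by simp
      show "V.dim (x K \<oplus>\<^sub>P P J0) \<le> 2" using join_dim_le[OF xK(1) g0'(4) xK(3) f0(2)] xK(2) g0'(5) by simp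
      show "L A \<subseteq> x K \<oplus>\<^sub>P L J0" "L B \<subseteq> x K \<oplus>\<^sub>P L J0" "P A \<subseteq> x K \<oplus>\<^sub>P P J0" "P B \<subseteq> x K \<oplus>\<^sub>P P J0"
        using LA0 PA0 by auto
    qed
  qed
  have PiS: "Pi K \<subseteq> Sg K" by (rule Sg_mono(3))
  have zL: "y (K+1) \<subseteq> x (K+1) \<oplus>\<^sub>P TL" using Y(5) join_mono[OF subset_refl TL(4), of "x (K+1)"] by auto
  have zP: "y (K+1) \<subseteq> x (K+1) \<oplus>\<^sub>P TP" using Y(5) join_mono[OF subset_refl TP(4), of "x (K+1)"] by auto
  note GLL = GL[OF Sg_sub(1) xK1(1,2) xS Y(1,2,4) TL(1,2,3) zL, of 2, OF _ gA'(1,9) TL(6,7) gA'(2,10) LAB]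
  note GLP = GL[OF Sg_sub(1) xK1(1,2) xS Y(1,2,4) TP(1,2) _ zP, of 1, OF _ _ gA'(4,12) TP(6,7) gA'(5,13) PAB]
  have GLL': "V.dim (L J) = 2" "\<not> L J \<subseteq> Sg K" using GLL TL(5) LJ by auto
  have TPS: "TP \<subseteq> Sg K" using TP(3) PiS by auto
  have GLP': "V.dim (P J) = 1" "\<not> P J \<subseteq> Sg K" "(x (K+1) \<oplus>\<^sub>P P A) \<inter> Sg K = P A"
      "(y (K+1) \<oplus>\<^sub>P P B) \<inter> Sg K = P B" "V.dim (x (K+1) \<oplus>\<^sub>P P A) = 2" "V.dim (y (K+1) \<oplus>\<^sub>P P B) = 2"
    using GLP[OF TPS] TP(5) PJ by auto
  have sLJ: "V.subspace (L J)" unfolding LJ by (rule V.subspace_inter[OF subspace_join subspace_join])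
  have sPJ: "V.subspace (P J)" unfolding PJ by (rule V.subspace_inter[OF subspace_join subspace_join])
  have fPJ: "FD (P J)" using FD_dim_pos[of "P J"] GLP'(1) by simp
  have SgK1: "Sg K \<subseteq> Sg (K+1)" "Pi K \<subseteq> Pi (K+1)" using Sg_mono by auto
  have LJs: "L J \<subseteq> Sg (K+1)"
  proof -
    have "x (K+1) \<oplus>\<^sub>P L A \<subseteq> Sg (K+1)"
      by (rule join_lub[OF x_in(1) _ Sg_sub(1)]) (use K gA'(3) SgK1 in auto)
    then show ?thesis unfolding LJ by auto
  qed
  have PJs: "P J \<subseteq> Pi (K+1)"
  proof -
    have "x (K+1) \<oplus>\<^sub>P P A \<subseteq> Pi (K+1)"
      by (rule join_lub[OF x_in(2) _ Sg_sub(2)]) (use K gA'(6) SgK1 in auto)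
    then show ?thesis unfolding PJ by auto
  qed
  have SP: "Sg K \<inter> Pi (K+1) = Pi K" using Sg_Pi K by simp
  have e1: "(x (K+1) \<oplus>\<^sub>P L A) \<inter> Pi (K+1) = x (K+1) \<oplus>\<^sub>P P A"
  proof -
    have "(x (K+1) \<oplus>\<^sub>P L A) \<inter> Pi (K+1) = x (K+1) \<oplus>\<^sub>P (L A \<inter> Pi (K+1))"
      by (rule modular[OF xK1(1) gA'(1) Sg_sub(2) x_in(2)]) (use K in auto)
    also have "L A \<inter> Pi (K+1) = L A \<inter> (Sg K \<inter> Pi (K+1))" using gA'(3) by auto
    also have "\<dots> = P A" using SP gA'(7) by simp
    finally show ?thesis .
  qed
  have e2: "(y (K+1) \<oplus>\<^sub>P L B) \<inter> Pi (K+1) = y (K+1) \<oplus>\<^sub>P P B"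
  proof -
    have "(y (K+1) \<oplus>\<^sub>P L B) \<inter> Pi (K+1) = y (K+1) \<oplus>\<^sub>P (L B \<inter> Pi (K+1))"
      by (rule modular[OF Y(1) gA'(9) Sg_sub(2) Y(7)])
    also have "L B \<inter> Pi (K+1) = L B \<inter> (Sg K \<inter> Pi (K+1))" using gA'(11) by auto
    also have "\<dots> = P B" using SP gA'(15) by simp
    finally show ?thesis .
  qed
  have LPJ: "L J \<inter> Pi (K+1) = P J"
  proof -
    have "L J \<inter> Pi (K+1) = ((x (K+1) \<oplus>\<^sub>P L A) \<inter> Pi (K+1)) \<inter> ((y (K+1) \<oplus>\<^sub>P L B) \<inter> Pi (K+1))"
      unfolding LJ by auto
    then show ?thesis unfolding e1 e2 PJ .
  qed
  have xKS: "x K \<subseteq> Sg K" using x_in K by auto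
  have PJx: "P J \<noteq> x (K+1)"
  proof
    assume eq: "P J = x (K+1)"
    have "x (K+1) \<subseteq> y (K+1) \<oplus>\<^sub>P P B" using eq unfolding PJ by auto
    then have "x (K+1) \<oplus>\<^sub>P y (K+1) \<subseteq> y (K+1) \<oplus>\<^sub>P P B"
      by (rule join_lub[OF _ join_ub1[OF Y(1)] subspace_join])
    then have "x K \<subseteq> (y (K+1) \<oplus>\<^sub>P P B) \<inter> Sg K" using Y(6) xKS by auto
    then have "x K \<subseteq> P B" using GLP'(4) by metis
    then have "x K = P B" using eq_dim[of "x K" "P B"] xK FD_dim_pos[of "P B"] gA'(12,13) by simp
    then show False using gA'(16) by simp
  qed
  show "good K J" unfolding good_def
    using sLJ GLL' LJs sPJ GLP'(1,2) PJs LPJ PJx PiS by auto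
  have PJsub: "P J \<subseteq> x (K+1) \<oplus>\<^sub>P P A" "P J \<subseteq> y (K+1) \<oplus>\<^sub>P P B" unfolding PJ by auto
  have fA: "FD (x (K+1) \<oplus>\<^sub>P P A)" "FD (y (K+1) \<oplus>\<^sub>P P B)"
    using FD_dim_pos[of "x (K+1) \<oplus>\<^sub>P P A"] FD_dim_pos[of "y (K+1) \<oplus>\<^sub>P P B"] GLP'(5,6) by simp_all
  have nx: "\<not> x (K+1) \<subseteq> P J"
  proof
    assume "x (K+1) \<subseteq> P J"
    then have "x (K+1) = P J" using eq_dim[of "x (K+1)" "P J"] xK1 fPJ GLP'(1) by simp
    then show False using PJx by simp
  qed
  have "V.dim (x (K+1) \<oplus>\<^sub>P P J) = 2" using join_point_dim[OF xK1(1,2) sPJ fPJ nx] GLP'(1) by simp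
  moreover have "x (K+1) \<oplus>\<^sub>P P J \<subseteq> x (K+1) \<oplus>\<^sub>P P A"
    by (rule join_lub[OF join_ub1[OF xK1(1)] PJsub(1) subspace_join])
  ultimately have "x (K+1) \<oplus>\<^sub>P P J = x (K+1) \<oplus>\<^sub>P P A"
    using eq_dim[OF _ subspace_join fA(1)] GLP'(5) by simp
  then show "(x (K+1) \<oplus>\<^sub>P P J) \<inter> Sg K = P (butlast J)" using GLP'(3) bA by simp
  have ny: "\<not> y (K+1) \<subseteq> P J"
  proof
    assume "y (K+1) \<subseteq> P J"
    then have "y (K+1) \<subseteq> x (K+1) \<oplus>\<^sub>P P A" using PJsub by auto
    then have "x (K+1) \<oplus>\<^sub>P y (K+1) \<subseteq> x (K+1) \<oplus>\<^sub>P P A"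
      by (rule join_lub[OF join_ub1[OF xK1(1)] _ subspace_join])
    then have "x K \<subseteq> (x (K+1) \<oplus>\<^sub>P P A) \<inter> Sg K" using Y(6) xKS by auto
    then have "x K \<subseteq> P A" using GLP'(3) by metis
    then have "x K = P A" using eq_dim[of "x K" "P A"] xK FD_dim_pos[of "P A"] gA'(4,5) by simp
    then show False using gA'(8) by simp
  qed
  have "V.dim (y (K+1) \<oplus>\<^sub>P P J) = 2" using join_point_dim[OF Y(1,2) sPJ fPJ ny] GLP'(1) by simp
  moreover have "y (K+1) \<oplus>\<^sub>P P J \<subseteq> y (K+1) \<oplus>\<^sub>P P B"
    by (rule join_lub[OF join_ub1[OF Y(1)] PJsub(2) subspace_join])
  ultimately have "y (K+1) \<oplus>\<^sub>P P J = y (K+1) \<oplus>\<^sub>P P B"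
    using eq_dim[OF _ subspace_join fA(2)] GLP'(6) by simp
  then show "(y (K+1) \<oplus>\<^sub>P P J) \<inter> Sg K = P (butlast (butlast J) @ [last J])" using GLP'(4) bA by simp
qed

end




context S2 begin

lemma InvD1: "Inv k \<Longrightarrow> ordered_subset m J \<Longrightarrow> length J = k \<Longrightarrow> good k J"
  unfolding Inv_def by simp

lemma InvD2: "Inv k \<Longrightarrow> ordered_subset m J \<Longrightarrow> length J = k \<Longrightarrow> ordered_subset m J' \<Longrightarrow> length J' = k
  \<Longrightarrow> P J = P J' \<Longrightarrow> J = J'"
  unfolding Inv_def by simp

lemma os_parts:
  assumes "ordered_subset m J" "2 \<le> length J"
  shows "ordered_subset m (butlast J)" "ordered_subset m (butlast (butlast J) @ [last J])"
proof -
  obtain J0 b a where Jd: "J = J0 @ [b, a]" using two_last[OF assms(2)] by auto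
  show "ordered_subset m (butlast J)" "ordered_subset m (butlast (butlast J) @ [last J])"
    using assms(1) unfolding Jd ordered_subset_def by (simp_all add: butlast_append)
qed

lemma Inv_step:
  assumes K: "2 \<le> K" "K + 1 \<le> n" and I1: "Inv (K - 1)" and I2: "3 \<le> K \<Longrightarrow> Inv (K - 2)"
  shows "Inv K"
  unfolding Inv_def
proof (intro conjI allI impI)
  fix J assume "ordered_subset m J \<and> length J = K"
  then show "good K J" using step_good(1)[OF K I1 I2, of J] by simp
next
  fix J J' assume H: "ordered_subset m J \<and> length J = K \<and> ordered_subset m J' \<and> length J' = K \<and> P J = P J'"
  have lK: "length (butlast J) = K - 1" "length (butlast J') = K - 1"
    "length (butlast (butlast J) @ [last J]) = K - 1" "length (butlast (butlast J') @ [last J']) = K - 1"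
    using H K by auto
  have o: "ordered_subset m (butlast J)" "ordered_subset m (butlast (butlast J) @ [last J])"
    "ordered_subset m (butlast J')" "ordered_subset m (butlast (butlast J') @ [last J'])"
    using os_parts H K by auto
  have "P (butlast J) = P (butlast J')"
    using step_good(2)[OF K I1 I2, of J] step_good(2)[OF K I1 I2, of J'] H by metis
  then have b1: "butlast J = butlast J'" using InvD2[OF I1 o(1) lK(1) o(3) lK(2)] by simp
  have "P (butlast (butlast J) @ [last J]) = P (butlast (butlast J') @ [last J'])"
    using step_good(3)[OF K I1 I2, of J] step_good(3)[OF K I1 I2, of J'] H by metis
  then have "butlast (butlast J) @ [last J] = butlast (butlast J') @ [last J']"
    using InvD2[OF I1 o(2) lK(3) o(4) lK(4)] by simp
  then have "last J = last J'" by (metis last_snoc)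
  moreover have "J \<noteq> []" "J' \<noteq> []" using H K by auto
  ultimately show "J = J'" using b1 by (metis append_butlast_last_id)
qed

lemma Inv_all: "1 \<le> k \<Longrightarrow> k + 1 \<le> n \<Longrightarrow> Inv k"
proof (induction k rule: less_induct)
  case (less k)
  show ?case
  proof (cases "k = 1")
    case True then show ?thesis using Inv1 by simp
  next
    case False
    then have K: "2 \<le> k" "k + 1 \<le> n" using less.prems by auto
    have I1: "Inv (k - 1)" using less.IH[of "k - 1"] K by auto
    have I2: "3 \<le> k \<Longrightarrow> Inv (k - 2)" using less.IH[of "k - 2"] K by auto
    show ?thesis by (rule Inv_step[OF K I1 I2])
  qed
qed

lemma Sg_amb: assumes "k \<le> n" shows "Sg k \<subseteq> ambient n"
  unfolding Sigma_sp_def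
proof (rule V.span_minimal[OF _ ambient_sub], rule UN_least)
  fix j assume "j \<in> {0..k}"
  then have "j \<le> n" using assms by auto
  then show "x j \<subseteq> ambient n" by (rule gp_pt(3)[OF gp])
qed

lemma main:
  shows "(\<forall>J. ordered_subset m J \<and> 1 \<le> length J \<and> length J \<le> n - 1 \<longrightarrow>
            pline n (ellJ x y l J) \<and> ppoint n (pJ x y l J) \<and>
            ellJ x y l J \<inter> pi_sp x (length J + 1) = pJ x y l J)
       \<and> (\<forall>J J'. ordered_subset m J \<and> 1 \<le> length J \<and> length J \<le> n - 1 \<and>
            ordered_subset m J' \<and> 1 \<le> length J' \<and> length J' \<le> n - 1 \<and> J \<noteq> J' \<longrightarrow>
            ellJ x y l J \<noteq> ellJ x y l J' \<and> pJ x y l J \<noteq> pJ x y l J')"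
proof (intro conjI allI impI)
  fix J assume H: "ordered_subset m J \<and> 1 \<le> length J \<and> length J \<le> n - 1"
  define k where "k = length J"
  have k: "1 \<le> k" "k + 1 \<le> n" using H n2 unfolding k_def by auto
  have g: "good k J" using InvD1[OF Inv_all[OF k], of J] H k_def by simp
  have amb: "Sg (k + 1) \<subseteq> ambient n" using Sg_amb k by simp
  have "Pi (k + 1) \<subseteq> Sg (k + 1)" by (rule Sg_mono(3))
  then show "pline n (L J)" "ppoint n (P J)" "L J \<inter> Pi (length J + 1) = P J"
    using g amb unfolding good_def psub_def k_def[symmetric] by auto
next
  fix J J' assume H: "ordered_subset m J \<and> 1 \<le> length J \<and> length J \<le> n - 1 \<and>
            ordered_subset m J' \<and> 1 \<le> length J' \<and> length J' \<le> n - 1 \<and> J \<noteq> J'"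
  from H have o: "ordered_subset m J" "ordered_subset m J'" and ne: "J \<noteq> J'"
    and k0: "1 \<le> length J" "length J \<le> n - 1" "1 \<le> length J'" "length J' \<le> n - 1" by auto
  define k where "k = length J"
  define k' where "k' = length J'"
  have k: "1 \<le> k" "k + 1 \<le> n" "1 \<le> k'" "k' + 1 \<le> n" using k0 n2 unfolding k_def k'_def by linarith+
  have I: "Inv k" "Inv k'" using Inv_all[OF k(1,2)] Inv_all[OF k(3,4)] .
  have g: "good k J" "good k' J'" using InvD1[OF I(1) o(1) k_def[symmetric]] InvD1[OF I(2) o(2) k'_def[symmetric]] .
  have "L J \<noteq> L J' \<and> P J \<noteq> P J'"
  proof (cases "k = k'")
    case True
    have PP: "P J \<noteq> P J'"
    proof
      assume "P J = P J'"
      then have "J = J'" using InvD2[OF I(1) o(1) k_def[symmetric] o(2)] True k'_def by simp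
      then show False using ne by simp
    qed
    moreover have "L J \<noteq> L J'"
    proof
      assume "L J = L J'"
      then have "L J \<inter> Pi (k + 1) = L J' \<inter> Pi (k' + 1)" using True by simp
      moreover have "L J \<inter> Pi (k + 1) = P J" "L J' \<inter> Pi (k' + 1) = P J'" using g unfolding good_def by simp_all
      ultimately show False using PP by simp
    qed
    ultimately show ?thesis by simp
  next
    case False
    have diff: "L A \<noteq> L B \<and> P A \<noteq> P B" if a: "1 \<le> j" "j < j'" "good j A" "good j' B" for j j' A B
    proof -
      have "Sg (j + 1) \<subseteq> Sg j'" "Pi (j + 1) \<subseteq> Pi j'" using Sg_mono(1,2)[of "j+1" j'] a(2) by simp_all
      moreover have "L A \<subseteq> Sg (j + 1)" "P A \<subseteq> Pi (j + 1)" using a(3) unfolding good_def by simp_all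
      moreover have "\<not> L B \<subseteq> Sg j'" "\<not> P B \<subseteq> Pi j'" using a(1,2,4) unfolding good_def by simp_all
      ultimately show "L A \<noteq> L B \<and> P A \<noteq> P B" by blast
    qed
    show ?thesis
    proof (cases "k < k'")
      case True then show ?thesis using diff[OF k(1) True g] by simp
    next
      case False then have "k' < k" using \<open>k \<noteq> k'\<close> by simp
      then show ?thesis using diff[OF k(3) _ g(2) g(1)] by auto
    qed
  qed
  then show "L J \<noteq> L J'" "P J \<noteq> P J'" by auto
qed

end


theorem lemma2p1:
  fixes n m :: nat
    and x y l :: "nat \<Rightarrow> (nat \<Rightarrow> 'k::field) set"
  assumes n2: "n \<ge> 2"
    and gp: "general_position n x"
    and y_pt: "\<And>i. 3 \<le> i \<Longrightarrow> i \<le> n \<Longrightarrow>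
        ppoint n (y i) \<and> y i \<subseteq> x (i - 1) \<oplus>\<^sub>P x i \<and> y i \<noteq> x (i - 1) \<and> y i \<noteq> x i"
    and l_line: "\<And>i. i \<in> {1..m} \<Longrightarrow> pline n (l i) \<and> l i \<subseteq> Sigma_sp x 2"
    and l_meet: "\<And>i. i \<in> {1..m} \<Longrightarrow> ppoint n (l i \<inter> pi_sp x 2) \<and> l i \<inter> pi_sp x 2 \<noteq> x 2"
    and l_dist: "\<And>i j. i \<in> {1..m} \<Longrightarrow> j \<in> {1..m} \<Longrightarrow> i \<noteq> j \<Longrightarrow>
        l i \<inter> pi_sp x 2 \<noteq> l j \<inter> pi_sp x 2"
  shows "(\<forall>J. ordered_subset m J \<and> 1 \<le> length J \<and> length J \<le> n - 1 \<longrightarrow>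
            pline n (ellJ x y l J) \<and> ppoint n (pJ x y l J) \<and>
            ellJ x y l J \<inter> pi_sp x (length J + 1) = pJ x y l J)
       \<and> (\<forall>J J'. ordered_subset m J \<and> 1 \<le> length J \<and> length J \<le> n - 1 \<and>
            ordered_subset m J' \<and> 1 \<le> length J' \<and> length J' \<le> n - 1 \<and> J \<noteq> J' \<longrightarrow>
            ellJ x y l J \<noteq> ellJ x y l J' \<and> pJ x y l J \<noteq> pJ x y l J')"
proof -
  interpret S2 n m x y l by (rule S2.intro) (fact n2 gp y_pt l_line l_meet l_dist)+
  show ?thesis by (rule main)
qed

end
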